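(* Let $R$ be an almost Dedekind domain. Then $\mathrm{Crit}_\alpha(R)\subseteq\partial^\alpha(\mathcal{M})$ for every ordinal $\alpha$.
   Context: $R$ almost Dedekind: $R_M$ is a DVR for each maximal $M$; $K$ quotient field. $\mathcal{M}$ is $\mathrm{Max}(R)$ with the inverse topology (restriction of the coarsest topology on $\mathrm{Spec}(R)$ in which Zariski-open Zariski-compact sets are closed). For a space $X$: $\partial^0(X)=X$, $\partial^{\gamma+1}(X)$ is the set of non-isolated points of $\partial^\gamma(X)$ (subspace topology), $\partial^\lambda(X)=\bigcap_{\beta<\lambda}\partial^\beta(X)$ for limit $\lambda$. A maximal ideal $M$ of an almost Dedekind domain $A$ is critical if every finitely generated ideal $J\subseteq M$ satisfies $J\subseteq N^2$ for some maximal $N$; $\mathrm{Crit}(A)$ is the set of these. Recursively: $\mathrm{Crit}_0(R)=\mathrm{Max}(R)$, $T_0=R$; $\mathrm{Crit}_{\gamma+1}(R)=\{P\in\mathrm{Max}(R)\mid PT_\gamma\in\mathrm{Crit}(T_\gamma)\}$; $\mathrm{Crit}_\lambda(R)=\bigcap_{\gamma<\lambda}\mathrm{Crit}_\gamma(R)$ for limit $\lambda$; $T_\alpha=\bigcap\{R_P\mid P\in\mathrm{Crit}_\alpha(R)\}$ ($=K$ if empty). *)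

theory Defs
  imports "HOL-Analysis.Analysis"
begin

text \<open>All rings are subrings of a fixed field 'k (the quotient field K of R).\<close>

definition subring_of :: "'k::field set \<Rightarrow> bool" where
  "subring_of A \<longleftrightarrow> 0 \<in> A \<and> 1 \<in> A \<and>
     (\<forall>x\<in>A. \<forall>y\<in>A. x + y \<in> A \<and> x - y \<in> A \<and> x * y \<in> A)"

definition ideal_of :: "'k::field set \<Rightarrow> 'k set \<Rightarrow> bool" where
  "ideal_of A I \<longleftrightarrow> I \<subseteq> A \<and> 0 \<in> I \<and> (\<forall>x\<in>I. \<forall>y\<in>I. x + y \<in> I) \<and>
     (\<forall>a\<in>A. \<forall>x\<in>I. a * x \<in> I)"

definition prime_ideal_of :: "'k::field set \<Rightarrow> 'k set \<Rightarrow> bool" where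
  "prime_ideal_of A P \<longleftrightarrow> ideal_of A P \<and> P \<noteq> A \<and>
     (\<forall>x\<in>A. \<forall>y\<in>A. x * y \<in> P \<longrightarrow> x \<in> P \<or> y \<in> P)"

definition maximal_ideal_of :: "'k::field set \<Rightarrow> 'k set \<Rightarrow> bool" where
  "maximal_ideal_of A M \<longleftrightarrow> ideal_of A M \<and> M \<noteq> A \<and>
     (\<forall>J. ideal_of A J \<and> M \<subseteq> J \<longrightarrow> J = M \<or> J = A)"

definition Spec :: "'k::field set \<Rightarrow> 'k set set" where
  "Spec A = {P. prime_ideal_of A P}"

definition MaxSpec :: "'k::field set \<Rightarrow> 'k set set" where
  "MaxSpec A = {M. maximal_ideal_of A M}"

definition gen_ideal :: "'k::field set \<Rightarrow> 'k set \<Rightarrow> 'k set" where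
  "gen_ideal A S = {x. \<exists>G c. finite G \<and> G \<subseteq> S \<and> (\<forall>g\<in>G. c g \<in> A) \<and> x = (\<Sum>g\<in>G. c g * g)}"

definition fin_gen_ideal_of :: "'k::field set \<Rightarrow> 'k set \<Rightarrow> bool" where
  "fin_gen_ideal_of A J \<longleftrightarrow> (\<exists>G. finite G \<and> G \<subseteq> A \<and> J = gen_ideal A G)"

definition ideal_square :: "'k::field set \<Rightarrow> 'k set \<Rightarrow> 'k set" where
  "ideal_square A N = gen_ideal A {x * y | x y. x \<in> N \<and> y \<in> N}"

definition localization :: "'k::field set \<Rightarrow> 'k set \<Rightarrow> 'k set" where
  "localization A P = {a / b | a b. a \<in> A \<and> b \<in> A \<and> b \<notin> P}"

definition is_DVR :: "'k::field set \<Rightarrow> bool" where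
  "is_DVR D \<longleftrightarrow> subring_of D \<and>
     (\<forall>I. ideal_of D I \<longrightarrow> (\<exists>a\<in>D. I = {a * x | x. x \<in> D})) \<and>
     (\<exists>!M. maximal_ideal_of D M) \<and>
     \<not> (\<forall>x\<in>D. x \<noteq> 0 \<longrightarrow> inverse x \<in> D)"

definition almost_Dedekind :: "'k::field set \<Rightarrow> bool" where
  "almost_Dedekind A \<longleftrightarrow> subring_of A \<and> (\<forall>M \<in> MaxSpec A. is_DVR (localization A M))"

definition is_quotient_field_of :: "'k::field set \<Rightarrow> bool" where
  "is_quotient_field_of A \<longleftrightarrow> (\<forall>x. \<exists>a b. a \<in> A \<and> b \<in> A \<and> b \<noteq> 0 \<and> x = a / b)"

definition Crit :: "'k::field set \<Rightarrow> 'k set set" where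
  "Crit A = {M \<in> MaxSpec A. \<forall>J. fin_gen_ideal_of A J \<and> J \<subseteq> M \<longrightarrow>
                 (\<exists>N \<in> MaxSpec A. J \<subseteq> ideal_square A N)}"

definition zariski :: "'k::field set \<Rightarrow> 'k set topology" where
  "zariski A = topology_generated_by
     (insert (Spec A) {{P \<in> Spec A. f \<notin> P} | f. f \<in> A})"

definition inverse_topology :: "'k::field set \<Rightarrow> 'k set topology" where
  "inverse_topology A = topology_generated_by
     (insert (Spec A) {Spec A - U | U. openin (zariski A) U \<and> compactin (zariski A) U})"

text \<open>The space M = Max(A) with the (restriction of the) inverse topology.\<close>
definition max_inv :: "'k::field set \<Rightarrow> 'k set topology" where
  "max_inv A = subtopology (inverse_topology A) (MaxSpec A)"

text \<open>Transfinite recursion over a well-order 'o (ordinals): value base at the least element,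
  step at successors, intersection at limits.\<close>
definition transfinite :: "'s set \<Rightarrow> ('s set \<Rightarrow> 's set) \<Rightarrow> 'o::wellorder \<Rightarrow> 's set" where
  "transfinite base step = wfrec {(x, y). x < y} (\<lambda>F a.
     if (\<forall>b. \<not> b < a) then base
     else if (\<exists>b. b < a \<and> (\<forall>c. \<not> (b < c \<and> c < a)))
       then step (F (THE b. b < a \<and> (\<forall>c. \<not> (b < c \<and> c < a))))
     else (\<Inter>b \<in> {b. b < a}. F b))"

definition CB_deriv :: "'a topology \<Rightarrow> 'o::wellorder \<Rightarrow> 'a set" where
  "CB_deriv X = transfinite (topspace X)
     (\<lambda>S. subtopology X S derived_set_of topspace (subtopology X S))"

text \<open>T for a set C of maximal ideals of R: intersection of the R_P, P in C (= K if C empty).\<close>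
definition T_of :: "'k::field set \<Rightarrow> 'k set set \<Rightarrow> 'k set" where
  "T_of R C = (\<Inter>P \<in> C. localization R P)"

definition Crit_seq :: "'k::field set \<Rightarrow> 'o::wellorder \<Rightarrow> 'k set set" where
  "Crit_seq R = transfinite (MaxSpec R)
     (\<lambda>C. {P \<in> MaxSpec R. gen_ideal (T_of R C) P \<in> Crit (T_of R C)})"

definition T_seq :: "'k::field set \<Rightarrow> 'o::wellorder \<Rightarrow> 'k set" where
  "T_seq R \<alpha> = T_of R (Crit_seq R \<alpha>)"

end

theory Submission
  imports Defs
begin

lemma sr0: "subring_of A \<Longrightarrow> 0 \<in> A" by (simp add: subring_of_def)
lemma sr1: "subring_of A \<Longrightarrow> 1 \<in> A" by (simp add: subring_of_def)
lemma sradd: "subring_of A \<Longrightarrow> x \<in> A \<Longrightarrow> y \<in> A \<Longrightarrow> x + y \<in> A" by (simp add: subring_of_def)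
lemma srmul: "subring_of A \<Longrightarrow> x \<in> A \<Longrightarrow> y \<in> A \<Longrightarrow> x * y \<in> A" by (simp add: subring_of_def)
lemma srdiff: "subring_of A \<Longrightarrow> x \<in> A \<Longrightarrow> y \<in> A \<Longrightarrow> x - y \<in> A" by (simp add: subring_of_def)

lemma sr_sum: assumes "subring_of A" "finite G" "\<And>g. g \<in> G \<Longrightarrow> f g \<in> A" shows "sum f G \<in> A"
  using assms(2,3)
proof (induction G rule: finite_induct)
  case empty then show ?case using sr0[OF assms(1)] by simp
next
  case (insert x F) then show ?case using sradd[OF assms(1)] by simp
qed

lemma sr_prod: assumes "subring_of A" "finite G" "\<And>g. g \<in> G \<Longrightarrow> f g \<in> A" shows "prod f G \<in> A"
  using assms(2,3)
proof (induction G rule: finite_induct)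
  case empty then show ?case using sr1[OF assms(1)] by simp
next
  case (insert x F) then show ?case using srmul[OF assms(1)] by simp
qed

lemma gen_ideal_least:
  assumes "0 \<in> I" "\<And>x y. x \<in> I \<Longrightarrow> y \<in> I \<Longrightarrow> x + y \<in> I"
    "\<And>a x. a \<in> A \<Longrightarrow> x \<in> I \<Longrightarrow> a * x \<in> I" "S \<subseteq> I"
  shows "gen_ideal A S \<subseteq> I"
proof
  fix x assume "x \<in> gen_ideal A S"
  then obtain G c where G: "finite G" "G \<subseteq> S" "\<forall>g\<in>G. c g \<in> A" "x = (\<Sum>g\<in>G. c g * g)"
    unfolding gen_ideal_def by blast
  have "(\<Sum>g\<in>G. c g * g) \<in> I" using G(1-3)
  proof (induction G rule: finite_induct)
    case empty then show ?case using assms(1) by simp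
  next
    case (insert x F)
    have "c x * x \<in> I" using insert.prems assms(3,4) by blast
    moreover have "(\<Sum>g\<in>F. c g * g) \<in> I" using insert by blast
    ultimately show ?case using insert.hyps assms(2) by simp
  qed
  then show "x \<in> I" using G by simp
qed

lemma gen_ideal_mono: "S \<subseteq> S' \<Longrightarrow> gen_ideal A S \<subseteq> gen_ideal A S'"
  unfolding gen_ideal_def by blast

lemma gen_ideal_gen: "subring_of A \<Longrightarrow> s \<in> S \<Longrightarrow> s \<in> gen_ideal A S"
  unfolding gen_ideal_def
  by (rule CollectI, rule exI[of _ "{s}"], rule exI[of _ "\<lambda>_. 1"]) (simp add: sr1)

lemma gen_ideal_subset: "subring_of A \<Longrightarrow> S \<subseteq> gen_ideal A S"
  using gen_ideal_gen by blast

lemma gen_ideal_zero: "0 \<in> gen_ideal A S"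
  unfolding gen_ideal_def by (rule CollectI, rule exI[of _ "{}"]) simp

lemma gen_ideal_add:
  assumes A: "subring_of A" and x: "x \<in> gen_ideal A S" and y: "y \<in> gen_ideal A S"
  shows "x + y \<in> gen_ideal A S"
proof -
  obtain G c where G: "finite G" "G \<subseteq> S" "\<forall>g\<in>G. c g \<in> A" "x = (\<Sum>g\<in>G. c g * g)"
    using x unfolding gen_ideal_def by blast
  obtain H d where H: "finite H" "H \<subseteq> S" "\<forall>g\<in>H. d g \<in> A" "y = (\<Sum>g\<in>H. d g * g)"
    using y unfolding gen_ideal_def by blast
  define e where "e = (\<lambda>g. (if g \<in> G then c g else 0) + (if g \<in> H then d g else 0))"
  have "(\<Sum>g\<in>G \<union> H. (if g \<in> G then c g else 0) * g) = (\<Sum>g\<in>G. c g * g)"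
    by (rule sum.mono_neutral_cong_right) (use G H in auto)
  moreover have "(\<Sum>g\<in>G \<union> H. (if g \<in> H then d g else 0) * g) = (\<Sum>g\<in>H. d g * g)"
    by (rule sum.mono_neutral_cong_right) (use G H in auto)
  ultimately have "x + y = (\<Sum>g\<in>G \<union> H. e g * g)"
    unfolding e_def distrib_right sum.distrib using G H by simp
  moreover have "\<forall>g\<in>G \<union> H. e g \<in> A"
  proof
    fix g assume "g \<in> G \<union> H"
    have "(if g \<in> G then c g else 0) \<in> A" using G(3) sr0[OF A] by simp
    moreover have "(if g \<in> H then d g else 0) \<in> A" using H(3) sr0[OF A] by simp
    ultimately show "e g \<in> A" unfolding e_def by (rule sradd[OF A])
  qed
  ultimately show ?thesis unfolding gen_ideal_def
    by (intro CollectI exI[of _ "G \<union> H"] exI[of _ e]) (use G H in simp)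
qed

lemma gen_ideal_mult:
  assumes A: "subring_of A" and a: "a \<in> A" and x: "x \<in> gen_ideal A S"
  shows "a * x \<in> gen_ideal A S"
proof -
  obtain G c where G: "finite G" "G \<subseteq> S" "\<forall>g\<in>G. c g \<in> A" "x = (\<Sum>g\<in>G. c g * g)"
    using x unfolding gen_ideal_def by blast
  have "a * x = (\<Sum>g\<in>G. (a * c g) * g)" using G by (simp add: sum_distrib_left mult.assoc)
  moreover have "\<forall>g\<in>G. a * c g \<in> A" using G A a by (auto intro: srmul)
  ultimately show ?thesis unfolding gen_ideal_def
    by (intro CollectI exI[of _ "G"] exI[of _ "\<lambda>g. a * c g"]) (use G in simp)
qed

lemma gen_ideal_in: assumes A: "subring_of A" and S: "S \<subseteq> A" shows "gen_ideal A S \<subseteq> A"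
  by (rule gen_ideal_least[OF sr0[OF A] sradd[OF A] srmul[OF A] S])

lemma gen_ideal_ideal: "subring_of A \<Longrightarrow> S \<subseteq> A \<Longrightarrow> ideal_of A (gen_ideal A S)"
  unfolding ideal_of_def
  by (intro conjI ballI gen_ideal_in gen_ideal_zero gen_ideal_add gen_ideal_mult)

lemma ideal_least: assumes I: "ideal_of A I" and S: "S \<subseteq> I" shows "gen_ideal A S \<subseteq> I"
  by (rule gen_ideal_least[OF _ _ _ S]) (use I in \<open>auto simp: ideal_of_def\<close>)

lemma ideal_one:
  assumes I: "ideal_of A I" and o: "1 \<in> I" shows "I = A"
proof
  show "I \<subseteq> A" using I unfolding ideal_of_def by blast
  show "A \<subseteq> I"
  proof
    fix a assume "a \<in> A"
    then have "a * 1 \<in> I" using I o unfolding ideal_of_def by blast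
    then show "a \<in> I" by simp
  qed
qed

lemma ideal_sq_sub:
  assumes N: "ideal_of A N" shows "ideal_square A N \<subseteq> N"
  unfolding ideal_square_def
proof (rule ideal_least[OF N subsetI])
  fix z assume "z \<in> {x * y |x y. x \<in> N \<and> y \<in> N}"
  then obtain x y where "z = x * y" "x \<in> N" "y \<in> N" by blast
  then show "z \<in> N" using N unfolding ideal_of_def by blast
qed

lemma max_comax:
  assumes R: "subring_of R" and M: "maximal_ideal_of R M" and a: "a \<in> R" "a \<notin> M"
  shows "\<exists>m\<in>M. \<exists>r\<in>R. 1 = m + r * a"
proof -
  define I where "I = {m + r * a | m r. m \<in> M \<and> r \<in> R}"
  have MR: "M \<subseteq> R" and Mi: "ideal_of R M" using M unfolding maximal_ideal_of_def ideal_of_def by auto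
  have "ideal_of R I"
    unfolding ideal_of_def
  proof (intro conjI ballI subsetI)
    fix x assume "x \<in> I"
    then obtain m r where "x = m + r * a" "m \<in> M" "r \<in> R" unfolding I_def by blast
    then show "x \<in> R" using MR R a by (auto intro: sradd srmul)
  next
    have "0 = 0 + 0 * a" by simp
    moreover have "(0::'a) \<in> M" using Mi unfolding ideal_of_def by blast
    ultimately show "0 \<in> I" unfolding I_def using sr0[OF R] by blast
  next
    fix x y assume "x \<in> I" "y \<in> I"
    then obtain m r m' r' where "x = m + r * a" "m \<in> M" "r \<in> R" "y = m' + r' * a" "m' \<in> M" "r' \<in> R"
      unfolding I_def by blast
    moreover have "x + y = (m + m') + (r + r') * a" using calculation by (simp add: algebra_simps)
    moreover have "m + m' \<in> M" using calculation Mi unfolding ideal_of_def by blast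
    moreover have "r + r' \<in> R" using calculation R by (auto intro: sradd)
    ultimately show "x + y \<in> I" unfolding I_def by blast
  next
    fix b x assume "b \<in> R" "x \<in> I"
    then obtain m r where "x = m + r * a" "m \<in> M" "r \<in> R" unfolding I_def by blast
    moreover have "b * x = (b * m) + (b * r) * a" using calculation by (simp add: algebra_simps)
    moreover have "b * m \<in> M" using calculation Mi \<open>b \<in> R\<close> unfolding ideal_of_def by blast
    moreover have "b * r \<in> R" using calculation R \<open>b \<in> R\<close> by (auto intro: srmul)
    ultimately show "b * x \<in> I" unfolding I_def by blast
  qed
  moreover have "M \<subseteq> I"
  proof
    fix m assume "m \<in> M" then have "m = m + 0 * a" by simp
    then show "m \<in> I" unfolding I_def using \<open>m \<in> M\<close> sr0[OF R] by blast
  qed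
  moreover have "a \<in> I"
  proof -
    have "a = 0 + 1 * a" by simp
    moreover have "(0::'a) \<in> M" using Mi unfolding ideal_of_def by blast
    ultimately show ?thesis unfolding I_def using sr1[OF R] by blast
  qed
  ultimately have "I = R" using M a(2) unfolding maximal_ideal_of_def by blast
  then have "1 \<in> I" using sr1[OF R] by simp
  then show ?thesis unfolding I_def by blast
qed

lemma max_prime:
  assumes R: "subring_of R" and M: "maximal_ideal_of R M"
  shows "prime_ideal_of R M"
  unfolding prime_ideal_of_def
proof (intro conjI ballI impI)
  have Mi: "ideal_of R M" "M \<noteq> R" using M unfolding maximal_ideal_of_def by auto
  show "ideal_of R M" by (fact Mi(1))
  show "M \<noteq> R" by (fact Mi(2))
next
  have Mi: "ideal_of R M" "M \<noteq> R" using M unfolding maximal_ideal_of_def by auto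
  fix x y assume x: "x \<in> R" and y: "y \<in> R" and xy: "x * y \<in> M"
  show "x \<in> M \<or> y \<in> M"
  proof (cases "x \<in> M")
    case True then show ?thesis by blast
  next
    case False
    then obtain m r where mr: "m \<in> M" "r \<in> R" "1 = m + r * x" using max_comax[OF R M x] by blast
    then have "y = y * m + r * (x * y)" by (metis distrib_left mult.commute mult.left_commute mult.right_neutral)
    moreover have "y * m \<in> M" using Mi y mr unfolding ideal_of_def by auto
    moreover have "r * (x * y) \<in> M" using Mi xy mr unfolding ideal_of_def by auto
    ultimately have "y \<in> M" using Mi unfolding ideal_of_def by metis
    then show ?thesis by blast
  qed
qed

lemma MaxSpec_Spec: "subring_of R \<Longrightarrow> MaxSpec R \<subseteq> Spec R"
  unfolding MaxSpec_def Spec_def using max_prime by blast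

lemma prime_ideal: "prime_ideal_of R P \<Longrightarrow> ideal_of R P"
  unfolding prime_ideal_of_def by blast

lemma prime_one: "prime_ideal_of R P \<Longrightarrow> 1 \<notin> P"
  unfolding prime_ideal_of_def using ideal_one by blast

lemma prime_zero: "prime_ideal_of R P \<Longrightarrow> 0 \<in> P"
  unfolding prime_ideal_of_def ideal_of_def by blast

lemma prime_sub: "prime_ideal_of R P \<Longrightarrow> P \<subseteq> R"
  unfolding prime_ideal_of_def ideal_of_def by blast

lemma prime_mult: "prime_ideal_of R P \<Longrightarrow> x \<in> R \<Longrightarrow> y \<in> R \<Longrightarrow> x \<notin> P \<Longrightarrow> y \<notin> P \<Longrightarrow> x * y \<notin> P"
  unfolding prime_ideal_of_def by blast

lemma prime_prod:
  assumes P: "prime_ideal_of R P" and R: "subring_of R" and G: "finite G"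
    and f: "\<And>g. g \<in> G \<Longrightarrow> f g \<in> R \<and> f g \<notin> P"
  shows "prod f G \<notin> P \<and> prod f G \<in> R"
  using G f
proof (induction G rule: finite_induct)
  case empty then show ?case using prime_one[OF P] sr1[OF R] by simp
next
  case (insert x F)
  then show ?case using prime_mult[OF P] srmul[OF R] by simp
qed

lemma exists_max:
  assumes R: "subring_of R" and L: "ideal_of R L" and one: "1 \<notin> L"
  shows "\<exists>M. maximal_ideal_of R M \<and> L \<subseteq> M"
proof -
  define \<A> where "\<A> = {I. ideal_of R I \<and> L \<subseteq> I \<and> 1 \<notin> I}"
  have "\<exists>M\<in>\<A>. \<forall>X\<in>\<A>. M \<subseteq> X \<longrightarrow> X = M"
  proof (rule subset_Zorn_nonempty)
    show "\<A> \<noteq> {}" using L one unfolding \<A>_def by blast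
  next
    fix \<C> assume C: "\<C> \<noteq> {}" "subset.chain \<A> \<C>"
    then have CA: "\<C> \<subseteq> \<A>" and ch: "\<forall>X\<in>\<C>. \<forall>Y\<in>\<C>. X \<subseteq> Y \<or> Y \<subseteq> X"
      unfolding subset_chain_def by auto
    obtain I0 where I0: "I0 \<in> \<C>" using C by blast
    have "ideal_of R (\<Union>\<C>)"
      unfolding ideal_of_def
    proof (intro conjI ballI)
      show "\<Union>\<C> \<subseteq> R" using CA unfolding \<A>_def ideal_of_def by blast
      show "0 \<in> \<Union>\<C>" using CA I0 unfolding \<A>_def ideal_of_def by blast
    next
      fix x y assume "x \<in> \<Union>\<C>" "y \<in> \<Union>\<C>"
      then obtain X Y where XY: "X \<in> \<C>" "Y \<in> \<C>" "x \<in> X" "y \<in> Y" by blast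
      show "x + y \<in> \<Union>\<C>"
      proof (cases "X \<subseteq> Y")
        case True
        then have "x + y \<in> Y" using XY CA unfolding \<A>_def ideal_of_def by blast
        then show ?thesis using XY by blast
      next
        case False
        then have "Y \<subseteq> X" using ch XY by blast
        then have "x + y \<in> X" using XY CA unfolding \<A>_def ideal_of_def by blast
        then show ?thesis using XY by blast
      qed
    next
      fix a x assume "a \<in> R" "x \<in> \<Union>\<C>"
      then obtain X where "X \<in> \<C>" "x \<in> X" by blast
      then have "a * x \<in> X" using \<open>a \<in> R\<close> CA unfolding \<A>_def ideal_of_def by blast
      then show "a * x \<in> \<Union>\<C>" using \<open>X \<in> \<C>\<close> by blast
    qed
    moreover have "L \<subseteq> \<Union>\<C>" using I0 CA unfolding \<A>_def by blast
    moreover have "1 \<notin> \<Union>\<C>" using CA unfolding \<A>_def by blast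
    ultimately show "\<Union>\<C> \<in> \<A>" unfolding \<A>_def by blast
  qed
  then obtain M where M: "M \<in> \<A>" "\<forall>X\<in>\<A>. M \<subseteq> X \<longrightarrow> X = M" by blast
  have "maximal_ideal_of R M"
    unfolding maximal_ideal_of_def
  proof (intro conjI allI impI)
    show "ideal_of R M" using M unfolding \<A>_def by blast
    show "M \<noteq> R" using M sr1[OF R] unfolding \<A>_def by blast
  next
    fix J assume J: "ideal_of R J \<and> M \<subseteq> J"
    show "J = M \<or> J = R"
    proof (cases "1 \<in> J")
      case True then show ?thesis using ideal_one J by blast
    next
      case False
      then have "J \<in> \<A>" using J M unfolding \<A>_def by blast
      then show ?thesis using M J by blast
    qed
  qed
  then show ?thesis using M unfolding \<A>_def by blast
qed

locale primeloc =
  fixes R :: "'k::field set" and P :: "'k set"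
  assumes R: "subring_of R" and P: "prime_ideal_of R P"
begin

abbreviation "L \<equiv> localization R P"

lemma nz: "b \<notin> P \<Longrightarrow> b \<noteq> 0"
  using prime_zero[OF P] by auto

lemma PR: "P \<subseteq> R" using prime_sub[OF P] .

lemma loc_intro: "a \<in> R \<Longrightarrow> b \<in> R \<Longrightarrow> b \<notin> P \<Longrightarrow> a / b \<in> L"
  unfolding localization_def by blast

lemma loc_elim: "x \<in> L \<Longrightarrow> (\<And>a b. a \<in> R \<Longrightarrow> b \<in> R \<Longrightarrow> b \<notin> P \<Longrightarrow> x = a / b \<Longrightarrow> thesis) \<Longrightarrow> thesis"
  unfolding localization_def by blast

lemma R_L: "R \<subseteq> L"
proof
  fix a assume "a \<in> R"
  then have "a / 1 \<in> L" using loc_intro sr1[OF R] prime_one[OF P] by blast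
  then show "a \<in> L" by simp
qed

lemma L_add: "x \<in> L \<Longrightarrow> y \<in> L \<Longrightarrow> x + y \<in> L"
proof -
  assume xy: "x \<in> L" "y \<in> L"
  obtain a b where ab: "a \<in> R" "b \<in> R" "b \<notin> P" "x = a / b" using xy(1) by (rule loc_elim)
  obtain a' b' where ab': "a' \<in> R" "b' \<in> R" "b' \<notin> P" "y = a' / b'" using xy(2) by (rule loc_elim)
  have "x + y = (a * b' + a' * b) / (b * b')" using ab ab' nz by (simp add: field_simps)
  moreover have "a * b' + a' * b \<in> R" using ab ab' R by (simp add: sradd srmul)
  moreover have "b * b' \<in> R" "b * b' \<notin> P" using ab ab' R prime_mult[OF P] by (auto simp: srmul)
  ultimately show ?thesis using loc_intro by simp
qed

lemma L_diff: "x \<in> L \<Longrightarrow> y \<in> L \<Longrightarrow> x - y \<in> L"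
proof -
  assume xy: "x \<in> L" "y \<in> L"
  obtain a b where ab: "a \<in> R" "b \<in> R" "b \<notin> P" "x = a / b" using xy(1) by (rule loc_elim)
  obtain a' b' where ab': "a' \<in> R" "b' \<in> R" "b' \<notin> P" "y = a' / b'" using xy(2) by (rule loc_elim)
  have "x - y = (a * b' - a' * b) / (b * b')" using ab ab' nz by (simp add: field_simps)
  moreover have "a * b' - a' * b \<in> R" using ab ab' R by (simp add: srdiff srmul)
  moreover have "b * b' \<in> R" "b * b' \<notin> P" using ab ab' R prime_mult[OF P] by (auto simp: srmul)
  ultimately show ?thesis using loc_intro by simp
qed

lemma L_mult: "x \<in> L \<Longrightarrow> y \<in> L \<Longrightarrow> x * y \<in> L"
proof -
  assume xy: "x \<in> L" "y \<in> L"
  obtain a b where ab: "a \<in> R" "b \<in> R" "b \<notin> P" "x = a / b" using xy(1) by (rule loc_elim)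
  obtain a' b' where ab': "a' \<in> R" "b' \<in> R" "b' \<notin> P" "y = a' / b'" using xy(2) by (rule loc_elim)
  have "x * y = (a * a') / (b * b')" using ab ab' by simp
  moreover have "a * a' \<in> R" using ab ab' R by (simp add: srmul)
  moreover have "b * b' \<in> R" "b * b' \<notin> P" using ab ab' R prime_mult[OF P] by (auto simp: srmul)
  ultimately show ?thesis using loc_intro by simp
qed

lemma L_subring: "subring_of L"
  unfolding subring_of_def
proof (intro conjI ballI)
  show "0 \<in> L" using R_L sr0[OF R] by blast
  show "1 \<in> L" using R_L sr1[OF R] by blast
qed (auto intro: L_add L_diff L_mult)

lemma L_inv: "f \<in> R \<Longrightarrow> f \<notin> P \<Longrightarrow> 1 / f \<in> L"
  using loc_intro sr1[OF R] by blast

lemma L_div: "g * f \<in> R \<Longrightarrow> f \<in> R \<Longrightarrow> f \<notin> P \<Longrightarrow> g \<in> L"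
  using loc_intro[of "g * f" f] nz[of f] by simp

definition NU where "NU = {a / b | a b. a \<in> P \<and> b \<in> R \<and> b \<notin> P}"

lemma NU_intro: "a \<in> P \<Longrightarrow> b \<in> R \<Longrightarrow> b \<notin> P \<Longrightarrow> a / b \<in> NU"
  unfolding NU_def by blast

lemma NU_ideal: "ideal_of L NU"
  unfolding ideal_of_def
proof (intro conjI ballI subsetI)
  fix x assume "x \<in> NU"
  then show "x \<in> L" unfolding NU_def using loc_intro PR by blast
next
  have "0 / 1 \<in> NU" unfolding NU_def using prime_zero[OF P] prime_one[OF P] sr1[OF R] by blast
  then show "0 \<in> NU" by simp
next
  fix x y assume "x \<in> NU" "y \<in> NU"
  then obtain a b a' b' where ab: "a \<in> P" "b \<in> R" "b \<notin> P" "x = a / b"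
    and ab': "a' \<in> P" "b' \<in> R" "b' \<notin> P" "y = a' / b'" unfolding NU_def by blast
  have e: "x + y = (a * b' + a' * b) / (b * b')" using ab ab' nz by (simp add: field_simps)
  have "a * b' + a' * b \<in> P"
  proof -
    have "b' * a \<in> P" "b * a' \<in> P" using ab ab' prime_ideal[OF P] unfolding ideal_of_def by auto
    then show ?thesis using prime_ideal[OF P] unfolding ideal_of_def by (simp add: mult.commute)
  qed
  moreover have "b * b' \<in> R" "b * b' \<notin> P" using ab ab' R prime_mult[OF P] by (auto simp: srmul)
  ultimately have "(a * b' + a' * b) / (b * b') \<in> NU" by (rule NU_intro)
  then show "x + y \<in> NU" by (simp only: e)
next
  fix c x assume cx: "c \<in> L" "x \<in> NU"
  obtain a b where ab: "a \<in> P" "b \<in> R" "b \<notin> P" "x = a / b"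
    using cx(2) unfolding NU_def by blast
  obtain a' b' where ab': "a' \<in> R" "b' \<in> R" "b' \<notin> P" "c = a' / b'"
    using cx(1) by (rule loc_elim)
  have e: "c * x = (a' * a) / (b' * b)" using ab ab' nz by (simp add: field_simps)
  have "a' * a \<in> P" using ab ab' prime_ideal[OF P] unfolding ideal_of_def by blast
  moreover have "b' * b \<in> R" "b' * b \<notin> P" using ab ab' R prime_mult[OF P] by (auto simp: srmul)
  ultimately have "(a' * a) / (b' * b) \<in> NU" by (rule NU_intro)
  then show "c * x \<in> NU" by (simp only: e)
qed

lemma one_NU: "1 \<notin> NU"
proof
  assume "1 \<in> NU"
  then obtain a b where ab: "a \<in> P" "b \<in> R" "b \<notin> P" "1 = a / b" unfolding NU_def by blast
  then have "a = b" using nz[of b] by (simp add: field_simps)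
  then show False using ab by simp
qed

lemma unit_of_not_NU: "x \<in> L \<Longrightarrow> x \<notin> NU \<Longrightarrow> 1 / x \<in> L"
proof -
  assume x: "x \<in> L" "x \<notin> NU"
  obtain a b where ab: "a \<in> R" "b \<in> R" "b \<notin> P" "x = a / b" using x(1) by (rule loc_elim)
  have "a \<notin> P" using ab x(2) unfolding NU_def by blast
  then have "b / a \<in> L" using loc_intro ab by blast
  moreover have "1 / x = b / a" using ab by simp
  ultimately show ?thesis by simp
qed

lemma NU_R: "x \<in> NU \<Longrightarrow> x \<in> R \<Longrightarrow> x \<in> P"
proof -
  assume "x \<in> NU" "x \<in> R"
  then obtain a b where ab: "a \<in> P" "b \<in> R" "b \<notin> P" "x = a / b" unfolding NU_def by blast
  then have "x * b = a" using nz by simp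
  then show "x \<in> P" using prime_mult[OF P \<open>x \<in> R\<close> ab(2)] ab by blast
qed

lemma P_NU: "P \<subseteq> NU"
proof
  fix p assume "p \<in> P"
  then have "p / 1 \<in> NU" unfolding NU_def using sr1[OF R] prime_one[OF P] by blast
  then show "p \<in> NU" by simp
qed

end

lemma ideal_sum:
  assumes I: "ideal_of A I" and G: "finite G" and f: "\<And>g. g \<in> G \<Longrightarrow> f g \<in> I"
  shows "sum f G \<in> I"
  using G f
proof (induction G rule: finite_induct)
  case empty then show ?case using I unfolding ideal_of_def by simp
next
  case (insert x F)
  then have "f x \<in> I" "sum f F \<in> I" by auto
  then show ?case using insert.hyps I unfolding ideal_of_def by simp
qed

definition Gens :: "'k::field set \<Rightarrow> 'k set \<Rightarrow> 'k set" where
  "Gens R H = {g * h | g h. (\<forall>h'\<in>H. g * h' \<in> R) \<and> h \<in> H}"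

locale aD =
  fixes R :: "'k::field set"
  assumes aD: "almost_Dedekind R"
begin

lemma R: "subring_of R" using aD unfolding almost_Dedekind_def by blast

lemma DVR: "M \<in> MaxSpec R \<Longrightarrow> is_DVR (localization R M)"
  using aD unfolding almost_Dedekind_def by blast

lemma pl: "M \<in> MaxSpec R \<Longrightarrow> primeloc R M"
  using max_prime[OF R] R unfolding primeloc_def MaxSpec_def by blast

lemma Gens_R: "Gens R H \<subseteq> R"
  unfolding Gens_def by blast

lemma INV:
  assumes H: "finite H" "H \<subseteq> R" and t0: "t0 \<in> H" "t0 \<noteq> 0"
  shows "1 \<in> gen_ideal R (Gens R H)"
proof (rule ccontr)
  assume one: "1 \<notin> gen_ideal R (Gens R H)"
  have L0: "ideal_of R (gen_ideal R (Gens R H))" using gen_ideal_ideal[OF R Gens_R] .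
  obtain M where M: "maximal_ideal_of R M" "gen_ideal R (Gens R H) \<subseteq> M"
    using exists_max[OF R L0 one] by blast
  have MM: "M \<in> MaxSpec R" using M unfolding MaxSpec_def by blast
  interpret primeloc R M using pl[OF MM] .
  have dvr: "is_DVR L" using DVR[OF MM] .
  have HL: "H \<subseteq> L" using H R_L by blast
  have Lsr: "subring_of L" by (rule L_subring)
  have "ideal_of L (gen_ideal L H)" by (rule gen_ideal_ideal[OF Lsr HL])
  then obtain a where a: "a \<in> L" "gen_ideal L H = {a * x | x. x \<in> L}"
    using dvr unfolding is_DVR_def by blast
  have "\<forall>h\<in>H. \<exists>s. s \<in> L \<and> h = a * s"
  proof
    fix h assume "h \<in> H"
    then have "h \<in> gen_ideal L H" using gen_ideal_gen[OF Lsr] by blast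
    then show "\<exists>s. s \<in> L \<and> h = a * s" using a by blast
  qed
  then obtain s where s: "\<And>h. h \<in> H \<Longrightarrow> s h \<in> L \<and> h = a * s h" by metis
  have anz: "a \<noteq> 0" using s[OF t0(1)] t0(2) by auto
  have "a * 1 \<in> gen_ideal L H" using a sr1[OF Lsr] by blast
  then obtain G c where G: "finite G" "G \<subseteq> H" "\<forall>g\<in>G. c g \<in> L" "a = (\<Sum>g\<in>G. c g * g)"
    unfolding gen_ideal_def by auto
  have "a = (\<Sum>g\<in>G. c g * (a * s g))"
    using G(4) by (intro trans[OF G(4)] sum.cong) (use G(2) s in auto)
  also have "\<dots> = a * (\<Sum>g\<in>G. c g * s g)"
    by (simp add: sum_distrib_left mult.assoc mult.left_commute)
  finally have sum1: "(\<Sum>g\<in>G. c g * s g) = 1" using anz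
    by (metis mult_cancel_left1)
  have "\<exists>h0\<in>G. c h0 * s h0 \<notin> NU"
  proof (rule ccontr)
    assume nt: "\<not> ?thesis"
    have "(\<Sum>g\<in>G. c g * s g) \<in> NU"
      by (rule ideal_sum[OF NU_ideal G(1)]) (use nt in blast)
    then show False using sum1 one_NU by simp
  qed
  then obtain h0 where h0: "h0 \<in> G" "c h0 * s h0 \<notin> NU" by blast
  have h0H: "h0 \<in> H" using h0 G by blast
  have sh0: "s h0 \<in> L" "h0 = a * s h0" using s[OF h0H] by auto
  have "s h0 \<notin> NU"
  proof
    assume "s h0 \<in> NU"
    then have "c h0 * s h0 \<in> NU" using NU_ideal G(3) h0(1) unfolding ideal_of_def by blast
    then show False using h0 by blast
  qed
  then have u: "1 / s h0 \<in> L" using unit_of_not_NU sh0 by blast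
  have snz: "s h0 \<noteq> 0" using \<open>s h0 \<notin> NU\<close> NU_ideal unfolding ideal_of_def by auto
  have "\<forall>y. h0 = a * y \<longrightarrow> y \<noteq> 0 \<longrightarrow> h0 \<noteq> 0" using anz by auto
  then have h0nz: "h0 \<noteq> 0" using sh0 snz by blast
  have quot: "h / h0 \<in> L" if "h \<in> H" for h
  proof -
    have "\<forall>x y. h = a * x \<longrightarrow> h0 = a * y \<longrightarrow> y \<noteq> 0 \<longrightarrow> h / h0 = x * (1 / y)"
      using anz by auto
    then have "h / h0 = s h * (1 / s h0)" using s[OF that] sh0 snz by blast
    moreover have "s h * (1 / s h0) \<in> L" using L_mult s[OF that] u by blast
    ultimately show ?thesis by (simp only:)
  qed
  have "\<forall>h\<in>H. \<exists>\<alpha> \<beta>. \<alpha> \<in> R \<and> \<beta> \<in> R \<and> \<beta> \<notin> M \<and> h / h0 = \<alpha> / \<beta>"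
  proof
    fix h assume "h \<in> H"
    show "\<exists>\<alpha> \<beta>. \<alpha> \<in> R \<and> \<beta> \<in> R \<and> \<beta> \<notin> M \<and> h / h0 = \<alpha> / \<beta>"
      using quot[OF \<open>h \<in> H\<close>] by (rule loc_elim) blast
  qed
  then obtain \<alpha> \<beta> where ab: "\<And>h. h \<in> H \<Longrightarrow> \<alpha> h \<in> R \<and> \<beta> h \<in> R \<and> \<beta> h \<notin> M \<and> h / h0 = \<alpha> h / \<beta> h"
    by metis
  define S where "S = prod \<beta> H"
  have S: "S \<notin> M" "S \<in> R" using prime_prod[OF P R H(1), of \<beta>] ab unfolding S_def by auto
  define g where "g = S / h0"
  have gH: "\<forall>h'\<in>H. g * h' \<in> R"
  proof
    fix h assume h: "h \<in> H"
    have bnz: "\<beta> h \<noteq> 0" using nz ab[OF h] by blast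
    have "S = \<beta> h * prod \<beta> (H - {h})" unfolding S_def using h H(1) by (simp add: prod.remove)
    then have "g * h = prod \<beta> (H - {h}) * \<alpha> h"
      unfolding g_def using ab[OF h] bnz h0nz
      by (simp add: field_simps)
    moreover have "prod \<beta> (H - {h}) \<in> R" by (rule sr_prod[OF R]) (use H(1) ab in auto)
    ultimately show "g * h \<in> R" using srmul[OF R] ab[OF h] by simp
  qed
  have "g * h0 \<in> Gens R H" unfolding Gens_def using gH h0H by blast
  moreover have "g * h0 = S" unfolding g_def using h0nz by simp
  ultimately have "S \<in> gen_ideal R (Gens R H)" using gen_ideal_gen[OF R] by metis
  then show False using M(2) S(1) by blast
qed

end

context aD begin

definition unif where
  "unif P t \<longleftrightarrow> t \<in> P \<and> t \<noteq> 0 \<and> (\<forall>p\<in>P. p / t \<in> localization R P) \<and> 1 / t \<notin> localization R P"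

lemma unif_ex:
  assumes PM: "P \<in> MaxSpec R" shows "\<exists>t. unif P t"
proof -
  interpret primeloc R P using pl[OF PM] .
  have dvr: "is_DVR L" using DVR[OF PM] .
  obtain \<pi> where pi: "\<pi> \<in> L" "NU = {\<pi> * x | x. x \<in> L}"
    using dvr NU_ideal unfolding is_DVR_def by blast
  have "\<pi> * 1 \<in> NU" using pi sr1[OF L_subring] by blast
  then obtain a b where ab: "a \<in> P" "b \<in> R" "b \<notin> P" "\<pi> = a / b" unfolding NU_def by auto
  have bnz: "b \<noteq> 0" using nz ab by blast
  have Pnz: "\<exists>p\<in>P. p \<noteq> 0"
  proof (rule ccontr)
    assume "\<not> ?thesis"
    then have P0: "\<And>p. p \<in> P \<Longrightarrow> p = 0" by blast
    have "\<forall>x\<in>L. x \<noteq> 0 \<longrightarrow> inverse x \<in> L"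
    proof (intro ballI impI)
      fix x assume x: "x \<in> L" "x \<noteq> 0"
      obtain c d where cd: "c \<in> R" "d \<in> R" "d \<notin> P" "x = c / d" using x(1) by (rule loc_elim)
      have "c \<noteq> 0" using cd x by auto
      then have "c \<notin> P" using P0 by blast
      then have "d / c \<in> L" using loc_intro cd by blast
      then show "inverse x \<in> L" using cd by simp
    qed
    then show False using dvr unfolding is_DVR_def by blast
  qed
  then obtain p0 where p0: "p0 \<in> P" "p0 \<noteq> 0" by blast
  have "p0 \<in> NU" using P_NU p0 by blast
  then obtain y where "p0 = \<pi> * y" using pi by blast
  then have "\<pi> \<noteq> 0" using p0 by auto
  then have anz: "a \<noteq> 0" using ab by auto
  have "\<forall>p\<in>P. p / a \<in> L"
  proof
    fix p assume "p \<in> P"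
    then have "p \<in> NU" using P_NU by blast
    then obtain x where x: "x \<in> L" "p = \<pi> * x" using pi by blast
    have "p / a = x * (1 / b)" using x(2) ab(4) anz bnz by simp
    moreover have "1 / b \<in> L" using L_inv ab by blast
    then have "x * (1 / b) \<in> L" using L_mult x(1) by blast
    ultimately show "p / a \<in> L" by (simp only:)
  qed
  moreover have "1 / a \<notin> L"
  proof
    assume "1 / a \<in> L"
    then obtain c d where cd: "c \<in> R" "d \<in> R" "d \<notin> P" "1 / a = c / d" by (rule loc_elim)
    have "d = a * c" using cd anz nz[of d] by (simp add: field_simps)
    moreover have "a * c \<in> P" using ab cd prime_ideal[OF P] unfolding ideal_of_def by (metis mult.commute)
    ultimately show False using cd by simp
  qed
  ultimately show ?thesis unfolding unif_def using ab anz by blast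
qed

lemma unif_div:
  assumes PM: "P \<in> MaxSpec R" and t: "unif P t" and y: "y \<in> R" "y / t \<in> localization R P"
  shows "y \<in> P"
proof -
  interpret primeloc R P using pl[OF PM] .
  obtain c d where cd: "c \<in> R" "d \<in> R" "d \<notin> P" "y / t = c / d" using y(2) by (rule loc_elim)
  have tnz: "t \<noteq> 0" "t \<in> P" using t unfolding unif_def by auto
  have "y * d = t * c" using cd tnz nz[of d] by (simp add: field_simps)
  moreover have "t * c \<in> P" using tnz cd prime_ideal[OF P] unfolding ideal_of_def by (metis mult.commute)
  ultimately have "y * d \<in> P" by simp
  then show "y \<in> P" using prime_mult[OF P y(1) cd(2)] cd(3) by blast
qed

end

locale Tctx = aD +
  fixes C :: "'a set set"
  assumes C: "C \<subseteq> MaxSpec R"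
begin

abbreviation "T \<equiv> T_of R C"

lemma T_mem: "x \<in> T \<longleftrightarrow> (\<forall>Q\<in>C. x \<in> localization R Q)"
  unfolding T_of_def by blast

lemma T_closed:
  assumes "\<And>Q. Q \<in> C \<Longrightarrow> primeloc R Q \<Longrightarrow> z \<in> localization R Q" shows "z \<in> T"
  unfolding T_mem using assms pl C by blast

lemma T_sub: "subring_of T"
proof -
  have a: "0 \<in> T" "1 \<in> T"
    by (rule T_closed, use primeloc.L_subring in \<open>auto simp: subring_of_def\<close>)+
  have b: "x + y \<in> T \<and> x - y \<in> T \<and> x * y \<in> T" if "x \<in> T" "y \<in> T" for x y
  proof (intro conjI)
    show "x + y \<in> T" by (rule T_closed) (use that primeloc.L_add T_mem in blast)
    show "x - y \<in> T" by (rule T_closed) (use that primeloc.L_diff T_mem in blast)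
    show "x * y \<in> T" by (rule T_closed) (use that primeloc.L_mult T_mem in blast)
  qed
  show ?thesis unfolding subring_of_def using a b by blast
qed

lemma R_T: "R \<subseteq> T"
  by (intro subsetI T_closed) (use primeloc.R_L in blast)

lemma T_L: "Q \<in> C \<Longrightarrow> T \<subseteq> localization R Q"
  using T_mem by blast

lemma gT_ideal: "S \<subseteq> R \<Longrightarrow> ideal_of T (gen_ideal T S)"
  using gen_ideal_ideal[OF T_sub] R_T by blast

lemma P_PT: "S \<subseteq> R \<Longrightarrow> S \<subseteq> gen_ideal T S"
  using gen_ideal_subset[OF T_sub] by blast

lemma idealD: "ideal_of A I \<Longrightarrow> a \<in> A \<Longrightarrow> x \<in> I \<Longrightarrow> a * x \<in> I"
  "ideal_of A I \<Longrightarrow> x \<in> I \<Longrightarrow> y \<in> I \<Longrightarrow> x + y \<in> I"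
  "ideal_of A I \<Longrightarrow> 0 \<in> I" "ideal_of A I \<Longrightarrow> I \<subseteq> A"
  unfolding ideal_of_def by auto

lemma PT_Dt:
  assumes PC: "P \<in> C" and t: "unif P t"
  shows "gen_ideal T P \<subseteq> {x. x / t \<in> localization R P}"
proof -
  interpret primeloc R P using pl C PC by blast
  show ?thesis
  proof (rule gen_ideal_least)
    show "0 \<in> {x. x / t \<in> L}" using sr0[OF L_subring] by simp
    show "x + y \<in> {x. x / t \<in> L}" if "x \<in> {x. x / t \<in> L}" "y \<in> {x. x / t \<in> L}" for x y
    proof -
      have "x / t + y / t \<in> L" using that L_add by blast
      then show ?thesis by (simp add: add_divide_distrib)
    qed
    show "a * x \<in> {x. x / t \<in> L}" if "a \<in> T" "x \<in> {x. x / t \<in> L}" for a x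
    proof -
      have "a * (x / t) \<in> L" using that L_mult T_L[OF PC] by blast
      then show ?thesis by (simp add: times_divide_eq_right)
    qed
    show "P \<subseteq> {x. x / t \<in> L}" using t unfolding unif_def by blast
  qed
qed

lemma one_PT: "P \<in> C \<Longrightarrow> unif P t \<Longrightarrow> 1 \<notin> gen_ideal T P"
  using PT_Dt unfolding unif_def by blast

lemma PT_sq:
  assumes PC: "P \<in> C" and t: "unif P t"
  shows "t \<notin> ideal_square T (gen_ideal T P)"
proof
  interpret primeloc R P using pl C PC by blast
  have tnz: "t \<noteq> 0" using t unfolding unif_def by blast
  assume "t \<in> ideal_square T (gen_ideal T P)"
  moreover have "ideal_square T (gen_ideal T P) \<subseteq> {x. x / (t * t) \<in> L}"
    unfolding ideal_square_def
  proof (rule gen_ideal_least)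
    show "0 \<in> {x. x / (t * t) \<in> L}" using sr0[OF L_subring] by simp
    show "x + y \<in> {x. x / (t * t) \<in> L}" if "x \<in> {x. x / (t * t) \<in> L}" "y \<in> {x. x / (t * t) \<in> L}" for x y
    proof -
      have "x / (t * t) + y / (t * t) \<in> L" using that L_add by blast
      then show ?thesis by (simp add: add_divide_distrib)
    qed
    show "a * x \<in> {x. x / (t * t) \<in> L}" if "a \<in> T" "x \<in> {x. x / (t * t) \<in> L}" for a x
    proof -
      have "a * (x / (t * t)) \<in> L" using that L_mult T_L[OF PC] by blast
      then show ?thesis by (simp add: times_divide_eq_right)
    qed
    show "{x * y |x y. x \<in> gen_ideal T P \<and> y \<in> gen_ideal T P} \<subseteq> {x. x / (t * t) \<in> L}"
    proof
      fix z assume "z \<in> {x * y |x y. x \<in> gen_ideal T P \<and> y \<in> gen_ideal T P}"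
      then obtain x y where xy: "z = x * y" "x \<in> gen_ideal T P" "y \<in> gen_ideal T P" by blast
      then have "x / t \<in> L" "y / t \<in> L" using PT_Dt[OF PC t] by auto
      then have "(x / t) * (y / t) \<in> L" using L_mult by blast
      then show "z \<in> {x. x / (t * t) \<in> L}" using xy by simp
    qed
  qed
  ultimately have "t / (t * t) \<in> L" by blast
  then have "1 / t \<in> L" using tnz by simp
  then show False using t unfolding unif_def by blast
qed

end

context aD begin

definition closed_inv :: "'k set set \<Rightarrow> bool" where
  "closed_inv D \<longleftrightarrow> (\<forall>P\<in>MaxSpec R - D. \<exists>F. finite F \<and> F \<subseteq> P \<and> (\<forall>Q\<in>D. \<not> F \<subseteq> Q))"

lemma closed_invD:
  assumes "closed_inv D" "P \<in> MaxSpec R" "P \<notin> D"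
  shows "\<exists>F. finite F \<and> F \<subseteq> P \<and> (\<forall>Q\<in>D. \<not> F \<subseteq> Q)"
  using assms unfolding closed_inv_def by blast

end

context Tctx begin

lemma PT_sup:
  assumes PC: "P \<in> C" and t: "unif P t" and x: "x \<in> T" "x / t \<in> localization R P"
  shows "x \<in> gen_ideal T P"
proof -
  have PM: "P \<in> MaxSpec R" using PC C by blast
  interpret primeloc R P using pl[OF PM] .
  have PT: "ideal_of T (gen_ideal T P)" using gT_ideal PR by blast
  have PsubPT: "P \<subseteq> gen_ideal T P" using P_PT PR by blast
  have xL: "x \<in> L" using x(1) T_L[OF PC] by blast
  obtain a b where ab: "a \<in> R" "b \<in> R" "b \<notin> P" "x = a / b" using xL by (rule loc_elim)
  have bnz: "b \<noteq> 0" using nz ab by blast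
  have axb: "a = x * b" using ab bnz by simp
  have Gsub: "gen_ideal R (Gens R {a, b}) \<subseteq> {y. x * y \<in> gen_ideal T P}"
  proof (rule gen_ideal_least)
    show "0 \<in> {y. x * y \<in> gen_ideal T P}" using gen_ideal_zero by simp
    show "y + z \<in> {y. x * y \<in> gen_ideal T P}" if "y \<in> {y. x * y \<in> gen_ideal T P}" "z \<in> {y. x * y \<in> gen_ideal T P}" for y z
      using that idealD(2)[OF PT] by (simp add: distrib_left)
    show "r * y \<in> {y. x * y \<in> gen_ideal T P}" if "r \<in> R" "y \<in> {y. x * y \<in> gen_ideal T P}" for r y
    proof -
      have "r * (x * y) \<in> gen_ideal T P" using that idealD(1)[OF PT] R_T by blast
      then show ?thesis by (simp add: mult.left_commute)
    qed
    show "Gens R {a, b} \<subseteq> {y. x * y \<in> gen_ideal T P}"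
    proof
      fix z assume "z \<in> Gens R {a, b}"
      then obtain g h where gh: "z = g * h" "g * a \<in> R" "g * b \<in> R" "h \<in> {a, b}"
        unfolding Gens_def by blast
      have "(g * a) / t = (x / t) * (g * b)" using axb by simp
      moreover have "(x / t) * (g * b) \<in> L" using L_mult x(2) gh(3) R_L by blast
      ultimately have "(g * a) / t \<in> L" by (simp only:)
      then have "g * a \<in> P" using unif_div[OF PM t gh(2)] by blast
      then have gaPT: "g * a \<in> gen_ideal T P" using PsubPT by blast
      show "z \<in> {y. x * y \<in> gen_ideal T P}"
      proof (cases "h = a")
        case True
        then have "x * z = x * (g * a)" using gh by simp
        moreover have "x * (g * a) \<in> gen_ideal T P" using idealD(1)[OF PT x(1) gaPT] .
        ultimately show ?thesis by (simp only: mem_Collect_eq)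
      next
        case False
        then have "h = b" using gh by blast
        then have "x * z = g * a" using gh axb by simp
        then show ?thesis using gaPT by (simp only: mem_Collect_eq)
      qed
    qed
  qed
  have "b \<in> {a, b}" "finite {a, b}" "{a, b} \<subseteq> R" using ab by auto
  then have "1 \<in> gen_ideal R (Gens R {a, b})" using INV bnz by blast
  then have "x * 1 \<in> gen_ideal T P" using Gsub by blast
  then show ?thesis by simp
qed

lemma PT_max:
  assumes PC: "P \<in> C" and t: "unif P t"
  shows "maximal_ideal_of T (gen_ideal T P)"
  unfolding maximal_ideal_of_def
proof (intro conjI allI impI)
  have PM: "P \<in> MaxSpec R" using PC C by blast
  interpret primeloc R P using pl[OF PM] .
  show PT: "ideal_of T (gen_ideal T P)" using gT_ideal PR by blast
  show "gen_ideal T P \<noteq> T" using one_PT[OF PC t] sr1[OF T_sub] by blast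
next
  fix J assume J: "ideal_of T J \<and> gen_ideal T P \<subseteq> J"
  have PM: "P \<in> MaxSpec R" using PC C by blast
  interpret primeloc R P using pl[OF PM] .
  have PsubPT: "P \<subseteq> gen_ideal T P" using P_PT PR by blast
  show "J = gen_ideal T P \<or> J = T"
  proof (cases "J \<subseteq> gen_ideal T P")
    case True then show ?thesis using J by blast
  next
    case False
    then obtain x where x: "x \<in> J" "x \<notin> gen_ideal T P" by blast
    have xT: "x \<in> T" using x J idealD(4) by blast
    have xL: "x \<in> L" using xT T_L[OF PC] by blast
    obtain a b where ab: "a \<in> R" "b \<in> R" "b \<notin> P" "x = a / b" using xL by (rule loc_elim)
    have bnz: "b \<noteq> 0" using nz ab by blast
    have "a \<notin> P"
    proof
      assume "a \<in> P"
      then have "a / t \<in> L" using t unfolding unif_def by blast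
      moreover have "1 / b \<in> L" using L_inv ab by blast
      ultimately have "(a / t) * (1 / b) \<in> L" using L_mult by blast
      moreover have "(a / t) * (1 / b) = x / t" using ab by simp
      ultimately have "x / t \<in> L" by simp
      then show False using PT_sup[OF PC t xT] x by blast
    qed
    then obtain m r where mr: "m \<in> P" "r \<in> R" "1 = m + r * a"
      using max_comax[OF R _ ab(1)] PM unfolding MaxSpec_def by blast
    have ra: "r * a = (r * b) * x" using ab bnz by simp
    have one: "1 = m + (r * b) * x" unfolding ra[symmetric] by (rule mr(3))
    have "m \<in> J" using mr PsubPT J by blast
    moreover have "(r * b) * x \<in> J" using idealD(1)[of T J "r * b" x] J x R_T srmul[OF R mr(2) ab(2)] by blast
    ultimately have "1 \<in> J" using one idealD(2)[of T J] J by metis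
    then show ?thesis using ideal_one J by blast
  qed
qed

abbreviation "C' \<equiv> {P \<in> MaxSpec R. gen_ideal T P \<in> Crit T}"

lemma unit_LQ:
  assumes QC: "Q \<in> C" and f: "f \<in> R" "f \<notin> Q" and gf: "g * f \<in> R"
  shows "g \<in> localization R Q"
proof -
  interpret primeloc R Q using pl C QC by blast
  show ?thesis using L_div gf f by blast
qed

lemma K1a:
  assumes cl: "closed_inv C" and PC': "P \<in> C'"
  shows "P \<in> C"
proof (rule ccontr)
  assume PnC: "P \<notin> C"
  have PM: "P \<in> MaxSpec R" using PC' by blast
  interpret primeloc R P using pl[OF PM] .
  have PTmax: "maximal_ideal_of T (gen_ideal T P)" using PC' unfolding Crit_def MaxSpec_def by blast
  have PT: "ideal_of T (gen_ideal T P)" using gT_ideal PR by blast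
  have PsubPT: "P \<subseteq> gen_ideal T P" using P_PT PR by blast
  obtain F where F: "finite F" "F \<subseteq> P" "\<forall>Q\<in>C. \<not> F \<subseteq> Q"
    using closed_invD[OF cl PM PnC] by blast
  obtain t where t: "unif P t" using unif_ex[OF PM] by blast
  have tP: "t \<in> P" "t \<noteq> 0" using t unfolding unif_def by auto
  define H where "H = insert t F"
  have H: "finite H" "H \<subseteq> P" "t \<in> H" using F tP unfolding H_def by auto
  have "1 \<in> gen_ideal R (Gens R H)" using INV H PR tP by blast
  moreover have "gen_ideal R (Gens R H) \<subseteq> gen_ideal T P"
  proof (rule gen_ideal_least)
    show "0 \<in> gen_ideal T P" by (rule gen_ideal_zero)
    show "x + y \<in> gen_ideal T P" if "x \<in> gen_ideal T P" "y \<in> gen_ideal T P" for x y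
      using that idealD(2)[OF PT] by blast
    show "a * x \<in> gen_ideal T P" if "a \<in> R" "x \<in> gen_ideal T P" for a x
      using that idealD(1)[OF PT] R_T by blast
    show "Gens R H \<subseteq> gen_ideal T P"
    proof
      fix z assume "z \<in> Gens R H"
      then obtain g h where gh: "z = g * h" "\<forall>h'\<in>H. g * h' \<in> R" "h \<in> H"
        unfolding Gens_def by blast
      have "g \<in> T"
      proof (rule T_closed)
        fix Q assume QC: "Q \<in> C"
        then obtain f where "f \<in> F" "f \<notin> Q" using F by blast
        moreover have "f \<in> R" "g * f \<in> R" using \<open>f \<in> F\<close> F PR gh H_def by auto
        ultimately show "g \<in> localization R Q" using unit_LQ[OF QC] by blast
      qed
      then show "z \<in> gen_ideal T P" using gh idealD(1)[OF PT] PsubPT H by blast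
    qed
  qed
  ultimately have "1 \<in> gen_ideal T P" by blast
  then show False using PTmax ideal_one sr1[OF T_sub] unfolding maximal_ideal_of_def by blast
qed

lemma K1b:
  assumes cl: "closed_inv C" and PC': "P \<in> C'" and F: "finite F" "F \<subseteq> P"
  shows "\<exists>Q\<in>C. Q \<noteq> P \<and> F \<subseteq> Q"
proof (rule ccontr)
  assume nF: "\<not> ?thesis"
  have PC: "P \<in> C" using K1a[OF cl PC'] .
  have PM: "P \<in> MaxSpec R" using PC' by blast
  interpret primeloc R P using pl[OF PM] .
  have PTcrit: "gen_ideal T P \<in> Crit T" using PC' by blast
  have PT: "ideal_of T (gen_ideal T P)" using gT_ideal PR by blast
  have PsubPT: "P \<subseteq> gen_ideal T P" using P_PT PR by blast
  obtain t where t: "unif P t" using unif_ex[OF PM] by blast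
  have tP: "t \<in> P" "t \<noteq> 0" using t unfolding unif_def by auto
  define H where "H = insert t F"
  have H: "finite H" "H \<subseteq> P" "t \<in> H" using F tP unfolding H_def by auto
  define J where "J = gen_ideal T H"
  have HT: "H \<subseteq> T" using H PR R_T by blast
  have Ji: "ideal_of T J" unfolding J_def using gen_ideal_ideal[OF T_sub HT] .
  have HJ: "H \<subseteq> J" unfolding J_def using gen_ideal_subset[OF T_sub] by blast
  have PJ: "P \<subseteq> J"
  proof
    fix p assume pP: "p \<in> P"
    have "gen_ideal R (Gens R H) \<subseteq> {y. p * y \<in> J}"
    proof (rule gen_ideal_least)
      show "0 \<in> {y. p * y \<in> J}" using idealD(3)[OF Ji] by simp
      show "y + z \<in> {y. p * y \<in> J}" if "y \<in> {y. p * y \<in> J}" "z \<in> {y. p * y \<in> J}" for y z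
        using that idealD(2)[OF Ji] by (simp add: distrib_left)
      show "r * y \<in> {y. p * y \<in> J}" if "r \<in> R" "y \<in> {y. p * y \<in> J}" for r y
      proof -
        have "r * (p * y) \<in> J" using that idealD(1)[OF Ji] R_T by blast
        then show ?thesis by (simp add: mult.left_commute)
      qed
      show "Gens R H \<subseteq> {y. p * y \<in> J}"
      proof
        fix z assume "z \<in> Gens R H"
        then obtain g h where gh: "z = g * h" "\<forall>h'\<in>H. g * h' \<in> R" "h \<in> H"
          unfolding Gens_def by blast
        have "p * g \<in> T"
        proof (rule T_closed)
          fix Q assume QC: "Q \<in> C"
          show "p * g \<in> localization R Q"
          proof (cases "Q = P")
            case True
            have "p / t \<in> L" using t pP unfolding unif_def by blast
            moreover have "g * t \<in> L" using gh H R_L by blast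
            ultimately have "(p / t) * (g * t) \<in> L" using L_mult by blast
            moreover have "(p / t) * (g * t) = p * g" using tP by simp
            ultimately show ?thesis using True by simp
          next
            case False
            then obtain f where f: "f \<in> F" "f \<notin> Q" using nF QC by blast
            moreover have "f \<in> R" "g * f \<in> R" using f F PR gh H_def by auto
            ultimately have "g \<in> localization R Q" using unit_LQ[OF QC] by blast
            moreover have "p \<in> localization R Q" using QC pP PR R_T T_L by blast
            ultimately show ?thesis using primeloc.L_mult[OF pl] C QC by blast
          qed
        qed
        then have "(p * g) * h \<in> J" using idealD(1)[OF Ji] HJ gh by blast
        then show "z \<in> {y. p * y \<in> J}" using gh by (simp add: mult.assoc)
      qed
    qed
    moreover have "1 \<in> gen_ideal R (Gens R H)" using INV H PR tP by blast
    ultimately have "p * 1 \<in> J" by blast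
    then show "p \<in> J" by simp
  qed
  have fg: "fin_gen_ideal_of T J" unfolding fin_gen_ideal_of_def J_def using H HT by blast
  have JPT: "J \<subseteq> gen_ideal T P" unfolding J_def using ideal_least[OF PT] H PsubPT by blast
  obtain N where N: "N \<in> MaxSpec T" "J \<subseteq> ideal_square T N"
    using PTcrit fg JPT unfolding Crit_def by blast
  have Nm: "maximal_ideal_of T N" using N unfolding MaxSpec_def by blast
  have Ni: "ideal_of T N" using Nm unfolding maximal_ideal_of_def by blast
  have "J \<subseteq> N" using N ideal_sq_sub[OF Ni] by blast
  then have "gen_ideal T P \<subseteq> N" using ideal_least[OF Ni] PJ by blast
  moreover have PTm: "maximal_ideal_of T (gen_ideal T P)" using PT_max[OF PC t] .
  ultimately have "N = gen_ideal T P" using Nm Ni unfolding maximal_ideal_of_def by blast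
  then have "t \<in> ideal_square T (gen_ideal T P)" using N HJ H by blast
  then show False using PT_sq[OF PC t] by blast
qed

lemma K2:
  assumes cl: "closed_inv C"
  shows "closed_inv C'"
  unfolding closed_inv_def
proof
  fix P assume Pm: "P \<in> MaxSpec R - C'"
  have PM: "P \<in> MaxSpec R" using Pm by blast
  interpret primeloc R P using pl[OF PM] .
  show "\<exists>F. finite F \<and> F \<subseteq> P \<and> (\<forall>Q\<in>C'. \<not> F \<subseteq> Q)"
  proof (cases "P \<in> C")
    case False
    then obtain F where F: "finite F" "F \<subseteq> P" "\<forall>Q\<in>C. \<not> F \<subseteq> Q"
      using closed_invD[OF cl PM False] by blast
    moreover have "C' \<subseteq> C" using K1a[OF cl] by blast
    ultimately show ?thesis by blast
  next
    case PC: True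
    obtain t where t: "unif P t" using unif_ex[OF PM] by blast
    have "gen_ideal T P \<in> MaxSpec T" using PT_max[OF PC t] unfolding MaxSpec_def by blast
    moreover have "gen_ideal T P \<notin> Crit T" using Pm by blast
    ultimately obtain J where J: "fin_gen_ideal_of T J" "J \<subseteq> gen_ideal T P"
      "\<forall>N\<in>MaxSpec T. \<not> J \<subseteq> ideal_square T N"
      unfolding Crit_def by blast
    obtain G where G: "finite G" "G \<subseteq> T" "J = gen_ideal T G"
      using J(1) unfolding fin_gen_ideal_of_def by blast
    have GJ: "G \<subseteq> J" using G gen_ideal_subset[OF T_sub] by blast
    have "\<forall>g\<in>G. \<exists>Fg. finite Fg \<and> Fg \<subseteq> P \<and> g \<in> gen_ideal T Fg"
    proof
      fix g assume "g \<in> G"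
      then have "g \<in> gen_ideal T P" using GJ J by blast
      then obtain G' c where G': "finite G'" "G' \<subseteq> P" "\<forall>g\<in>G'. c g \<in> T" "g = (\<Sum>g\<in>G'. c g * g)"
        unfolding gen_ideal_def by blast
      have "g \<in> gen_ideal T G'" unfolding gen_ideal_def using G' by blast
      then show "\<exists>Fg. finite Fg \<and> Fg \<subseteq> P \<and> g \<in> gen_ideal T Fg" using G' by blast
    qed
    then obtain Fg where Fg: "\<And>g. g \<in> G \<Longrightarrow> finite (Fg g) \<and> Fg g \<subseteq> P \<and> g \<in> gen_ideal T (Fg g)"
      by metis
    define F where "F = (\<Union>g\<in>G. Fg g)"
    have F: "finite F" "F \<subseteq> P" unfolding F_def using Fg G(1) by auto
    have FT: "F \<subseteq> T" using F PR R_T by blast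
    have GF: "G \<subseteq> gen_ideal T F"
    proof
      fix g assume g: "g \<in> G"
      then have "g \<in> gen_ideal T (Fg g)" using Fg by blast
      moreover have "Fg g \<subseteq> F" unfolding F_def using g by blast
      ultimately show "g \<in> gen_ideal T F" using gen_ideal_mono by blast
    qed
    have JF: "J \<subseteq> gen_ideal T F"
      using G(3) ideal_least[OF gen_ideal_ideal[OF T_sub FT] GF] by simp
    have "\<forall>Q\<in>C'. \<not> F \<subseteq> Q"
    proof (intro ballI notI)
      fix Q assume Q: "Q \<in> C'" "F \<subseteq> Q"
      have "fin_gen_ideal_of T (gen_ideal T F)" unfolding fin_gen_ideal_of_def using F FT by blast
      moreover have "gen_ideal T F \<subseteq> gen_ideal T Q" using gen_ideal_mono Q(2) by blast
      ultimately obtain N where "N \<in> MaxSpec T" "gen_ideal T F \<subseteq> ideal_square T N"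
        using Q(1) unfolding Crit_def by blast
      then show False using J(3) JF by blast
    qed
    then show ?thesis using F by blast
  qed
qed

end

definition Dof :: "'k::field set \<Rightarrow> 'k \<Rightarrow> 'k set set" where
  "Dof R f = {P \<in> Spec R. f \<notin> P}"

lemma ex_nb:
  assumes "finite F" "F \<subseteq> P" "\<forall>Q\<in>M. F \<subseteq> Q \<longrightarrow> Q \<in> A" "A \<subseteq> B"
  shows "\<exists>F. finite F \<and> F \<subseteq> P \<and> (\<forall>Q\<in>M. F \<subseteq> Q \<longrightarrow> Q \<in> B)"
proof (intro exI[of _ F] conjI)
  show "\<forall>Q\<in>M. F \<subseteq> Q \<longrightarrow> Q \<in> B" using assms(3,4) by blast
qed (use assms in auto)

context aD begin

lemma zar_basic:
  assumes "openin (zariski R) U" "Q \<in> U"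
  shows "\<exists>f\<in>R. Q \<in> Dof R f \<and> Dof R f \<subseteq> U"
proof -
  have g: "generate_topology_on (insert (Spec R) {{P \<in> Spec R. f \<notin> P} | f. f \<in> R}) U"
    using assms(1) unfolding zariski_def by (simp add: openin_topology_generated_by_iff)
  show ?thesis using g assms(2)
  proof (induction arbitrary: Q rule: generate_topology_on.induct)
    case Empty then show ?case by simp
  next
    case (Int a b)
    obtain f where f: "f \<in> R" "Q \<in> Dof R f" "Dof R f \<subseteq> a" using Int by blast
    obtain g where g: "g \<in> R" "Q \<in> Dof R g" "Dof R g \<subseteq> b" using Int by blast
    have Qp: "prime_ideal_of R Q" "f \<notin> Q" "g \<notin> Q" using f g unfolding Dof_def Spec_def by auto
    have "f * g \<notin> Q" using prime_mult[OF Qp(1) f(1) g(1) Qp(2,3)] .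
    moreover have "f * g \<in> R" using srmul[OF R f(1) g(1)] .
    moreover have "Dof R (f * g) \<subseteq> Dof R f \<inter> Dof R g"
    proof
      fix P assume "P \<in> Dof R (f * g)"
      then have P: "prime_ideal_of R P" "f * g \<notin> P" unfolding Dof_def Spec_def by auto
      have "f \<notin> P"
      proof
        assume "f \<in> P"
        then have "g * f \<in> P" using prime_ideal[OF P(1)] g(1) unfolding ideal_of_def by blast
        then show False using P(2) by (simp add: mult.commute)
      qed
      moreover have "g \<notin> P"
      proof
        assume "g \<in> P"
        then have "f * g \<in> P" using prime_ideal[OF P(1)] f(1) unfolding ideal_of_def by blast
        then show False using P(2) by simp
      qed
      ultimately show "P \<in> Dof R f \<inter> Dof R g" using P unfolding Dof_def Spec_def by auto
    qed
    ultimately show ?case using f g Qp unfolding Dof_def Spec_def by (intro bexI[of _ "f * g"]) auto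
  next
    case (UN K)
    then obtain k where "k \<in> K" "Q \<in> k" by blast
    then show ?case using UN.IH[of k Q] by blast
  next
    case (Basis s)
    then consider "s = Spec R" | f where "f \<in> R" "s = {P \<in> Spec R. f \<notin> P}" by blast
    then show ?case
    proof cases
      case 1
      have "Q \<in> Dof R 1" using Basis 1 prime_one unfolding Dof_def Spec_def by auto
      moreover have "Dof R 1 \<subseteq> s" using 1 unfolding Dof_def by auto
      ultimately show ?thesis using sr1[OF R] by blast
    next
      case 2
      then show ?thesis using Basis unfolding Dof_def by blast
    qed
  qed
qed

lemma Dof_open: "f \<in> R \<Longrightarrow> openin (zariski R) (Dof R f)"
  unfolding zariski_def Dof_def by (rule topology_generated_by_Basis) blast

lemma compact_complement:
  assumes U: "openin (zariski R) U" "compactin (zariski R) U" and P: "P \<in> Spec R" "P \<notin> U"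
  shows "\<exists>F. finite F \<and> F \<subseteq> P \<and> (\<forall>Q\<in>MaxSpec R. F \<subseteq> Q \<longrightarrow> Q \<notin> U)"
proof -
  define \<U> where "\<U> = {Dof R f | f. f \<in> R \<and> Dof R f \<subseteq> U}"
  have "\<forall>B\<in>\<U>. openin (zariski R) B" unfolding \<U>_def using Dof_open by blast
  moreover have "U \<subseteq> \<Union>\<U>"
  proof
    fix Q assume "Q \<in> U"
    then obtain f where "f \<in> R" "Q \<in> Dof R f" "Dof R f \<subseteq> U" using zar_basic U(1) by blast
    then show "Q \<in> \<Union>\<U>" unfolding \<U>_def by blast
  qed
  ultimately obtain \<F> where \<F>: "finite \<F>" "\<F> \<subseteq> \<U>" "U \<subseteq> \<Union>\<F>"
    using U(2) unfolding compactin_def by meson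
  have "\<forall>S\<in>\<F>. \<exists>f. f \<in> R \<and> S = Dof R f \<and> Dof R f \<subseteq> U" using \<F>(2) unfolding \<U>_def by blast
  then obtain rep where rep: "\<And>S. S \<in> \<F> \<Longrightarrow> rep S \<in> R \<and> S = Dof R (rep S) \<and> Dof R (rep S) \<subseteq> U"
    by metis
  define F where "F = rep ` \<F>"
  have "finite F" unfolding F_def using \<F>(1) by blast
  moreover have "F \<subseteq> P"
  proof
    fix f assume "f \<in> F"
    then obtain S where S: "S \<in> \<F>" "f = rep S" unfolding F_def by blast
    show "f \<in> P"
    proof (rule ccontr)
      assume "f \<notin> P"
      then have "P \<in> Dof R f" using P(1) unfolding Dof_def by blast
      then show False using rep[OF S(1)] S(2) P(2) by blast
    qed
  qed
  moreover have "\<forall>Q\<in>MaxSpec R. F \<subseteq> Q \<longrightarrow> Q \<notin> U"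
  proof (intro ballI impI notI)
    fix Q assume Q: "Q \<in> MaxSpec R" "F \<subseteq> Q" "Q \<in> U"
    then obtain S where S: "S \<in> \<F>" "Q \<in> S" using \<F>(3) by blast
    then have "Q \<in> Dof R (rep S)" using rep by blast
    then have "rep S \<notin> Q" unfolding Dof_def by blast
    moreover have "rep S \<in> F" unfolding F_def using S by blast
    ultimately show False using Q(2) by blast
  qed
  ultimately show ?thesis by (intro exI[of _ F]) simp
qed

lemma inv_nbhd:
  assumes V: "openin (inverse_topology R) V" and P: "P \<in> V" "P \<in> MaxSpec R"
  shows "\<exists>F. finite F \<and> F \<subseteq> P \<and> (\<forall>Q\<in>MaxSpec R. F \<subseteq> Q \<longrightarrow> Q \<in> V)"
proof -
  have g: "generate_topology_on (insert (Spec R) {Spec R - U | U. openin (zariski R) U \<and> compactin (zariski R) U}) V"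
    using V unfolding inverse_topology_def by (simp add: openin_topology_generated_by_iff)
  show ?thesis using g P
  proof (induction arbitrary: P rule: generate_topology_on.induct)
    case Empty
    then have False by simp
    then show ?case by (rule FalseE)
  next
    case (Int a b)
    have ha: "P \<in> a" "P \<in> b" "P \<in> MaxSpec R" using Int.prems by auto
    have e1: "\<exists>F. finite F \<and> F \<subseteq> P \<and> (\<forall>Q\<in>MaxSpec R. F \<subseteq> Q \<longrightarrow> Q \<in> a)"
      using Int.IH(1)[OF ha(1) ha(3)] .
    have e2: "\<exists>F. finite F \<and> F \<subseteq> P \<and> (\<forall>Q\<in>MaxSpec R. F \<subseteq> Q \<longrightarrow> Q \<in> b)"
      using Int.IH(2)[OF ha(2) ha(3)] .
    obtain F1 where F1: "finite F1" "F1 \<subseteq> P" "\<forall>Q\<in>MaxSpec R. F1 \<subseteq> Q \<longrightarrow> Q \<in> a" using e1 by blast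
    obtain F2 where F2: "finite F2" "F2 \<subseteq> P" "\<forall>Q\<in>MaxSpec R. F2 \<subseteq> Q \<longrightarrow> Q \<in> b" using e2 by blast
    have "\<forall>Q\<in>MaxSpec R. F1 \<union> F2 \<subseteq> Q \<longrightarrow> Q \<in> a \<inter> b" using F1 F2 by blast
    then show ?case using ex_nb[of "F1 \<union> F2" P "MaxSpec R" "a \<inter> b" "a \<inter> b"] F1 F2 by blast
  next
    case (UN K)
    then obtain k where "k \<in> K" "P \<in> k" by blast
    then have "\<exists>F. finite F \<and> F \<subseteq> P \<and> (\<forall>Q\<in>MaxSpec R. F \<subseteq> Q \<longrightarrow> Q \<in> k)"
      using UN.IH[of k P] UN.prems by blast
    then obtain F where F: "finite F" "F \<subseteq> P" "\<forall>Q\<in>MaxSpec R. F \<subseteq> Q \<longrightarrow> Q \<in> k"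
      by blast
    show ?case by (rule ex_nb[OF F]) (use \<open>k \<in> K\<close> in blast)
  next
    case (Basis s)
    then consider "s = Spec R" | U where "openin (zariski R) U" "compactin (zariski R) U" "s = Spec R - U"
      by blast
    then show ?case
    proof cases
      case 1
      show ?thesis by (rule ex_nb[of "{}" P "MaxSpec R" "MaxSpec R"]) (use 1 MaxSpec_Spec[OF R] in auto)
    next
      case 2
      have PS: "P \<in> Spec R" "P \<notin> U" using Basis.prems 2 by auto
      obtain F where F: "finite F" "F \<subseteq> P" "\<forall>Q\<in>MaxSpec R. F \<subseteq> Q \<longrightarrow> Q \<notin> U"
        using compact_complement[OF 2(1,2) PS] by blast
      have "\<forall>Q\<in>MaxSpec R. F \<subseteq> Q \<longrightarrow> Q \<in> s" using F(3) 2(3) MaxSpec_Spec[OF R] by blast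
      then show ?thesis by (rule ex_nb[OF F(1,2)]) simp
    qed
  qed
qed

lemma topspace_max: "topspace (max_inv R) = MaxSpec R"
  unfolding max_inv_def inverse_topology_def using MaxSpec_Spec[OF R] by auto

end

lemma transfinite_eq:
  fixes a :: "'o::wellorder"
  shows "transfinite base step a = (if (\<forall>b. \<not> b < a) then base
     else if (\<exists>b. b < a \<and> (\<forall>c. \<not> (b < c \<and> c < a)))
       then step (transfinite base step (THE b. b < a \<and> (\<forall>c. \<not> (b < c \<and> c < a))))
     else (\<Inter>b \<in> {b. b < a}. transfinite base step b))"
proof -
  have w: "wf {(x, y). (x::'o) < y}" by (rule wf)
  have the_lt: "(THE b. b < a \<and> (\<forall>c. \<not> (b < c \<and> c < a))) < a"
    if ex: "\<exists>b. b < a \<and> (\<forall>c. \<not> (b < c \<and> c < a))"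
  proof -
    obtain b where b: "b < a" "\<forall>c. \<not> (b < c \<and> c < a)" using ex by blast
    have "(THE b. b < a \<and> (\<forall>c. \<not> (b < c \<and> c < a))) = b"
    proof (rule the_equality)
      show "b < a \<and> (\<forall>c. \<not> (b < c \<and> c < a))" using b by blast
      fix b' assume b': "b' < a \<and> (\<forall>c. \<not> (b' < c \<and> c < a))"
      show "b' = b"
      proof (rule ccontr)
        assume "b' \<noteq> b"
        then have "b' < b \<or> b < b'" by (rule neq_iff[THEN iffD1])
        then show False using b b' by blast
      qed
    qed
    then show ?thesis using b by simp
  qed
  show ?thesis
    unfolding transfinite_def
    apply (subst wfrec[OF w])
    using the_lt by (auto simp: cut_apply)
qed

lemma transfinite_base:
  fixes a :: "'o::wellorder"
  assumes "\<forall>b. \<not> b < a" shows "transfinite base step a = base"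
  using assms by (subst transfinite_eq) simp

lemma transfinite_succ:
  fixes a :: "'o::wellorder"
  assumes b: "b < a" "\<forall>c. \<not> (b < c \<and> c < a)"
  shows "transfinite base step a = step (transfinite base step b)"
proof -
  have "(THE b. b < a \<and> (\<forall>c. \<not> (b < c \<and> c < a))) = b"
  proof (rule the_equality)
    show "b < a \<and> (\<forall>c. \<not> (b < c \<and> c < a))" using b by blast
    fix b' assume b': "b' < a \<and> (\<forall>c. \<not> (b' < c \<and> c < a))"
    show "b' = b"
    proof (rule ccontr)
      assume "b' \<noteq> b"
      then have "b' < b \<or> b < b'" by (rule neq_iff[THEN iffD1])
      then show False using b b' by blast
    qed
  qed
  then show ?thesis using b by (subst transfinite_eq) auto
qed

lemma transfinite_lim:
  fixes a :: "'o::wellorder"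
  assumes "\<exists>b. b < a" "\<not> (\<exists>b. b < a \<and> (\<forall>c. \<not> (b < c \<and> c < a)))"
  shows "transfinite base step a = (\<Inter>b \<in> {b. b < a}. transfinite base step b)"
  using assms by (subst transfinite_eq) auto

theorem lemma5p4:
  fixes R :: "'k::field set" and \<alpha> :: "'o::wellorder"
  assumes "almost_Dedekind R" and "is_quotient_field_of R"
  shows "Crit_seq R \<alpha> \<subseteq> CB_deriv (max_inv R) \<alpha>"
proof -
  interpret aD R using assms(1) by (unfold_locales)
  define X where "X = max_inv R"
  define step where "step = (\<lambda>C. {P \<in> MaxSpec R. gen_ideal (T_of R C) P \<in> Crit (T_of R C)})"
  define dstep where "dstep = (\<lambda>S. subtopology X S derived_set_of topspace (subtopology X S))"
  have CS: "Crit_seq R = transfinite (MaxSpec R) step" unfolding Crit_seq_def step_def ..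
  have CB: "CB_deriv X = transfinite (topspace X) dstep" unfolding CB_deriv_def dstep_def ..
  have tX: "topspace X = MaxSpec R" unfolding X_def by (rule topspace_max)
  have main: "Crit_seq R a \<subseteq> MaxSpec R \<and> closed_inv (Crit_seq R a) \<and> Crit_seq R a \<subseteq> CB_deriv X a"
    for a :: 'o
  proof (induction a rule: less_induct)
    case (less a)
    consider (base) "\<forall>b. \<not> b < a"
      | (succ) b where "b < a" "\<forall>c. \<not> (b < c \<and> c < a)"
      | (lim) "\<exists>b. b < a" "\<not> (\<exists>b. b < a \<and> (\<forall>c. \<not> (b < c \<and> c < a)))"
      by blast
    then show ?case
    proof cases
      case base
      have e1: "Crit_seq R a = MaxSpec R" unfolding CS using transfinite_base[OF base] .
      have e2: "CB_deriv X a = MaxSpec R" unfolding CB using transfinite_base[OF base] tX by simp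
      show ?thesis unfolding e1 e2 closed_inv_def by blast
    next
      case succ
      have e1: "Crit_seq R a = step (Crit_seq R b)" unfolding CS using transfinite_succ[OF succ] .
      have e2: "CB_deriv X a = dstep (CB_deriv X b)" unfolding CB using transfinite_succ[OF succ] .
      have IH: "Crit_seq R b \<subseteq> MaxSpec R" "closed_inv (Crit_seq R b)" "Crit_seq R b \<subseteq> CB_deriv X b"
        using less.IH[OF succ(1)] by auto
      interpret Tctx R "Crit_seq R b" using IH(1) by unfold_locales
      have st: "step (Crit_seq R b) = C'" unfolding step_def ..
      have s1: "C' \<subseteq> MaxSpec R" by blast
      have s2: "closed_inv C'" using K2[OF IH(2)] .
      have s3: "C' \<subseteq> dstep (CB_deriv X b)"
      proof
        fix P assume PC': "P \<in> C'"
        have PC: "P \<in> Crit_seq R b" using K1a[OF IH(2) PC'] .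
        have PM: "P \<in> MaxSpec R" using PC' by blast
        define S where "S = CB_deriv X b"
        have PS: "P \<in> S" using PC IH(3) unfolding S_def by blast
        have top: "topspace (subtopology X S) = MaxSpec R \<inter> S" using tX by simp
        show "P \<in> dstep (CB_deriv X b)"
          unfolding dstep_def S_def[symmetric] in_derived_set_of
        proof (intro conjI allI impI)
          show "P \<in> topspace (subtopology X S)" using top PM PS by blast
          fix V assume V: "P \<in> V \<and> openin (subtopology X S) V"
          then obtain W where W: "openin X W" "V = W \<inter> S" by (auto simp: openin_subtopology)
          then obtain W0 where W0: "openin (inverse_topology R) W0" "W = W0 \<inter> MaxSpec R"
            unfolding X_def max_inv_def by (auto simp: openin_subtopology)
          have PW0: "P \<in> W0" using V W W0 by blast
          obtain F where F: "finite F" "F \<subseteq> P" "\<forall>Q\<in>MaxSpec R. F \<subseteq> Q \<longrightarrow> Q \<in> W0"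
            using inv_nbhd[OF W0(1) PW0 PM] by blast
          obtain Q where Q: "Q \<in> Crit_seq R b" "Q \<noteq> P" "F \<subseteq> Q"
            using K1b[OF IH(2) PC' F(1,2)] by blast
          have QM: "Q \<in> MaxSpec R" using Q IH(1) by blast
          have QS: "Q \<in> S" using Q IH(3) unfolding S_def by blast
          have "Q \<in> V" using F(3) QM Q(3) W W0 QS by blast
          moreover have "Q \<in> topspace (subtopology X S)" using top QM QS by blast
          ultimately show "\<exists>y. y \<noteq> P \<and> y \<in> topspace (subtopology X S) \<and> y \<in> V"
            using Q(2) by blast
        qed
      qed
      show ?thesis unfolding e1 e2 st using s1 s2 s3 by blast
    next
      case lim
      have e1: "Crit_seq R a = (\<Inter>b \<in> {b. b < a}. Crit_seq R b)"
        unfolding CS using transfinite_lim[OF lim] .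
      have e2: "CB_deriv X a = (\<Inter>b \<in> {b. b < a}. CB_deriv X b)"
        unfolding CB using transfinite_lim[OF lim] .
      obtain b0 where b0: "b0 < a" using lim by blast
      have s1: "(\<Inter>b \<in> {b. b < a}. Crit_seq R b) \<subseteq> MaxSpec R"
        using less.IH[OF b0] b0 by blast
      have s2: "closed_inv (\<Inter>b \<in> {b. b < a}. Crit_seq R b)"
        unfolding closed_inv_def
      proof
        fix P assume P: "P \<in> MaxSpec R - (\<Inter>b \<in> {b. b < a}. Crit_seq R b)"
        then obtain b where b: "b < a" "P \<notin> Crit_seq R b" by blast
        have "closed_inv (Crit_seq R b)" using less.IH[OF b(1)] by blast
        moreover have "P \<in> MaxSpec R" using P by blast
        ultimately have "\<exists>F. finite F \<and> F \<subseteq> P \<and> (\<forall>Q\<in>Crit_seq R b. \<not> F \<subseteq> Q)"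
          using closed_invD b(2) by blast
        then obtain F where F: "finite F" "F \<subseteq> P" "\<forall>Q\<in>Crit_seq R b. \<not> F \<subseteq> Q"
          by blast
        show "\<exists>F. finite F \<and> F \<subseteq> P \<and> (\<forall>Q\<in>(\<Inter>b \<in> {b. b < a}. Crit_seq R b). \<not> F \<subseteq> Q)"
          by (intro exI[of _ F] conjI F(1,2)) (use F(3) b(1) in blast)
      qed
      have s3: "(\<Inter>b \<in> {b. b < a}. Crit_seq R b) \<subseteq> (\<Inter>b \<in> {b. b < a}. CB_deriv X b)"
        using less.IH by blast
      show ?thesis unfolding e1 e2 using s1 s2 s3 by blast
    qed
  qed
  then show ?thesis unfolding X_def by blast
qed

end
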